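(* For each positive integer $n\ge 4$, there exists a pair of sidigraphs $S,S'$ of order $n$, both strongly connected and both non cycle balanced, which are noncospectral and satisfy $E(S)=E(S')$.
   Context: A sidigraph is a digraph (no loops, at most one arc from $u$ to $v$) with a sign $\pm1$ on each arc; its eigenvalues are those of its adjacency matrix, whose $(i,j)$ entry is the sign of the arc from $v_i$ to $v_j$ if it exists and $0$ otherwise; its spectrum is the multiset of eigenvalues, and two sidigraphs are cospectral if their spectra coincide. A sidigraph is strongly connected if its underlying digraph is. The sign of a directed cycle is the product of its arc signs; a sidigraph is cycle balanced if every directed cycle is positive, non cycle balanced otherwise. The energy of a sidigraph with eigenvalues $z_1,\dots,z_n$ is $E(S)=\sum_{j=1}^n|\Re z_j|$. *)

theory Defs
  imports Complex_Main "Jordan_Normal_Form.Char_Poly"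
begin

text \<open>Entry (i,j) is the sign of the arc from i to j, or 0 if there is no arc.\<close>

definition sidigraph :: "nat \<Rightarrow> int mat \<Rightarrow> bool" where
  "sidigraph n A \<longleftrightarrow> A \<in> carrier_mat n n \<and>
     (\<forall>i<n. \<forall>j<n. A $$ (i,j) \<in> {-1, 0, 1}) \<and> (\<forall>i<n. A $$ (i,i) = 0)"

definition arcs :: "int mat \<Rightarrow> (nat \<times> nat) set" where
  "arcs A = {(i,j). i < dim_row A \<and> j < dim_row A \<and> A $$ (i,j) \<noteq> 0}"

definition strongly_connected :: "int mat \<Rightarrow> bool" where
  "strongly_connected A \<longleftrightarrow> (\<forall>i < dim_row A. \<forall>j < dim_row A. (i,j) \<in> (arcs A)\<^sup>*)"

definition dcycle :: "int mat \<Rightarrow> nat list \<Rightarrow> bool" where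
  "dcycle A vs \<longleftrightarrow> length vs \<ge> 2 \<and> distinct vs \<and>
     (\<forall>i < length vs. (vs ! i, vs ! ((i + 1) mod length vs)) \<in> arcs A)"

definition cycle_sign :: "int mat \<Rightarrow> nat list \<Rightarrow> int" where
  "cycle_sign A vs = (\<Prod>i < length vs. A $$ (vs ! i, vs ! ((i + 1) mod length vs)))"

definition cycle_balanced :: "int mat \<Rightarrow> bool" where
  "cycle_balanced A \<longleftrightarrow> (\<forall>vs. dcycle A vs \<longrightarrow> cycle_sign A vs > 0)"

definition spectrum_sd :: "int mat \<Rightarrow> complex multiset" where
  "spectrum_sd A = proots (char_poly (map_mat of_int A :: complex mat))"

definition cospectral :: "int mat \<Rightarrow> int mat \<Rightarrow> bool" where
  "cospectral A B \<longleftrightarrow> spectrum_sd A = spectrum_sd B"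

definition energy :: "int mat \<Rightarrow> real" where
  "energy A = sum_mset (image_mset (\<lambda>z. \<bar>Re z\<bar>) (spectrum_sd A))"

end

theory Submission imports Defs begin

lemma det_neg_mat: assumes "(M::'a::comm_ring_1 mat) \<in> carrier_mat n n"
  shows "det (- M) = (-1)^n * det M"
proof -
  have "- M = (-1) \<cdot>\<^sub>m M" using assms by (intro eq_matI) auto
  thus ?thesis using assms by simp
qed

lemma poly_char_poly_neg: assumes B: "(B::complex mat) \<in> carrier_mat n n"
  shows "poly (char_poly (-B)) x = (-1)^n * poly (char_poly B) (-x)"
proof -
  have nB: "-B \<in> carrier_mat n n" using B by simp
  have "poly (char_poly (-B)) x = det (- char_matrix (-B) x)" by (rule char_poly_matrix[OF nB])
  also have "- char_matrix (-B) x = char_matrix B (-x)"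
    using B by (intro eq_matI) (auto simp: char_matrix_def)
  finally have 1: "poly (char_poly (-B)) x = det (char_matrix B (-x))" .
  have "poly (char_poly B) (-x) = det (- char_matrix B (-x))" by (rule char_poly_matrix[OF B])
  also have "\<dots> = (-1)^n * det (char_matrix B (-x))"
    by (rule det_neg_mat) (use B in auto)
  finally show ?thesis using 1 by (simp add: power_mult_distrib[symmetric])
qed

lemma char_poly_neg: assumes B: "(B::complex mat) \<in> carrier_mat n n"
  and as: "char_poly B = (\<Prod>a\<leftarrow>as. [:- a, 1:])" "length as = n"
  shows "char_poly (-B) = (\<Prod>a\<leftarrow>as. [:a, 1:])"
proof (rule poly_eq_poly_eq_iff[THEN iffD1], rule ext)
  fix x
  have "poly (char_poly (-B)) x = (-1)^n * (\<Prod>a\<leftarrow>as. (- x - a))"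
    by (simp add: poly_char_poly_neg[OF B] as poly_prod_list o_def, rule arg_cong[where f=prod_list], auto)
  also have "\<dots> = (\<Prod>a\<leftarrow>as. (x + a))" using as(2)[symmetric]
  proof (induction as arbitrary: n)
    case (Cons a as) thus ?case by (auto simp: algebra_simps)
  qed simp
  also have "\<dots> = poly (\<Prod>a\<leftarrow>as. [:a, 1:]) x"
    by (simp add: poly_prod_list o_def add.commute)
  finally show "poly (char_poly (-B)) x = poly (\<Prod>a\<leftarrow>as. [:a, 1:]) x" .
qed

lemma proots_lin: "proots (\<Prod>a\<leftarrow>as. [:c * a, 1::complex:]) = mset (map (\<lambda>a. - c * a) as)"
proof (induction as)
  case (Cons a as)
  have "proots ([:c * a, 1:] * (\<Prod>a\<leftarrow>as. [:c * a, 1::complex:])) = proots [:c * a, 1:] + proots (\<Prod>a\<leftarrow>as. [:c * a, 1::complex:])"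
    by (rule proots_mult) (auto simp: prod_list_zero_iff)
  thus ?case using Cons by simp
qed simp

lemma spec_neg: assumes A: "A \<in> carrier_mat n n"
  shows "spectrum_sd (-A) = image_mset uminus (spectrum_sd A)"
proof -
  let ?B = "map_mat of_int A :: complex mat"
  have B: "?B \<in> carrier_mat n n" using A by simp
  have nB: "map_mat of_int (-A) = - ?B" using A by (intro eq_matI) auto
  obtain as where as: "char_poly ?B = (\<Prod>a\<leftarrow>as. [:- a, 1:])" "length as = n"
    using char_poly_factorized[OF B] by blast
  have 1: "spectrum_sd A = mset as"
    using proots_lin[of "-1" as] by (simp add: spectrum_sd_def as)
  have 2: "spectrum_sd (-A) = mset (map uminus as)"
    using proots_lin[of 1 as] by (simp add: spectrum_sd_def nB char_poly_neg[OF B as])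
  show ?thesis using 1 2 by simp
qed

definition Sm :: "nat \<Rightarrow> int mat" where
  "Sm n = mat n n (\<lambda>(i,j). (if i=1 \<and> j=0 then -1 else 0) + (if i=1 \<and> j=3 then 1 else 0)
      + (if j = Suc i mod n then 1 else 0))"

lemma Sm_carrier[simp]: "Sm n \<in> carrier_mat n n" by (simp add: Sm_def)
lemma Sm_dim[simp]: "dim_row (Sm n) = n" "dim_col (Sm n) = n" by (simp_all add: Sm_def)

lemma mult_entry:
  assumes n: "n \<ge> 4" and i: "i < n" and v: "v \<in> carrier_vec n"
  shows "(map_mat of_int (Sm n) *\<^sub>v v :: complex vec) $ i =
     (if i = 1 then v $ 3 - v $ 0 else 0) + v $ (Suc i mod n)"
proof -
  have m2: "Suc (Suc 0) mod n = Suc (Suc 0)" using n by simp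
  have "(map_mat of_int (Sm n) *\<^sub>v v :: complex vec) $ i =
     (\<Sum>j<n. ((if i=1 \<and> j=0 then -1 else 0) + (if i=1 \<and> j=3 then 1 else 0)
      + (if j = Suc i mod n then 1 else 0)) * v $ j)"
    using i v by (simp add: mult_mat_vec_def scalar_prod_def Sm_def lessThan_atLeast0, intro sum.cong refl, auto simp: m2)
  also have "\<dots> = (\<Sum>j<n. (if i=1 \<and> j=0 then - v$j else 0)) + (\<Sum>j<n. (if i=1 \<and> j=3 then v$j else 0))
      + (\<Sum>j<n. (if j = Suc i mod n then v$j else 0))"
    by (subst sum.distrib[symmetric], subst sum.distrib[symmetric], rule sum.cong, auto simp: m2 split: if_splits)
  also have "\<dots> = (if i = 1 then v $ 3 - v $ 0 else 0) + v $ (Suc i mod n)"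
    using n by (simp add: sum.delta' sum.neutral)
  finally show ?thesis .
qed

lemma Sm_entry: "i < n \<Longrightarrow> j < n \<Longrightarrow> Sm n $$ (i,j) = (if i=1 \<and> j=0 then -1 else 0) + (if i=1 \<and> j=3 then 1 else 0)
      + (if j = Suc i mod n then 1 else 0)" by (simp add: Sm_def)

lemma suc_mod_ne: "n \<ge> 2 \<Longrightarrow> i < n \<Longrightarrow> Suc i mod n \<noteq> i"
  by (cases "Suc i = n") auto

lemma Sm_step: assumes n: "n \<ge> 4" and i: "i < n" shows "Sm n $$ (i, Suc i mod n) = 1"
proof -
  have m2: "Suc (Suc 0) mod n = Suc (Suc 0)" using n by simp
  show ?thesis using i n by (subst Sm_entry) (auto simp: m2)
qed

lemma Sm_10: "n \<ge> 4 \<Longrightarrow> Sm n $$ (1,0) = -1" by (simp add: Sm_entry)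
lemma Sm_01: "n \<ge> 4 \<Longrightarrow> Sm n $$ (0,1) = 1" using Sm_step[of n 0] by simp

lemma sidi: assumes n: "n \<ge> 4" shows "sidigraph n (Sm n)" "sidigraph n (- Sm n)"
proof -
  have m2: "Suc (Suc 0) mod n = Suc (Suc 0)" using n by simp
  have e: "Sm n $$ (i,j) \<in> {-1,0,1}" if "i<n" "j<n" for i j
    using that n by (subst Sm_entry) (auto simp: m2)
  have d: "Sm n $$ (i,i) = 0" if "i<n" for i
    using that n suc_mod_ne[of n i] by (subst Sm_entry) auto
  show "sidigraph n (Sm n)" unfolding sidigraph_def using e d by auto
  show "sidigraph n (- Sm n)" unfolding sidigraph_def using e d by auto
qed

lemma arcs_neg: "arcs (- Sm n) = arcs (Sm n)"
  unfolding arcs_def by auto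

lemma sc: assumes n: "n \<ge> 4" shows "strongly_connected (Sm n)"
proof -
  let ?R = "arcs (Sm n)"
  have st: "(i, Suc i mod n) \<in> ?R" if "i < n" for i
    using Sm_step[OF n that] that n by (auto simp: arcs_def)
  have a: "(0,k) \<in> ?R\<^sup>*" if "k < n" for k
    using that
  proof (induction k)
    case (Suc k)
    have "(k, Suc k) \<in> ?R" using st[of k] Suc.prems by simp
    thus ?case using Suc by (meson Suc_lessD rtrancl.rtrancl_into_rtrancl)
  qed simp
  have b: "(n-1-d, 0) \<in> ?R\<^sup>*" if "d < n" for d
    using that
  proof (induction d)
    case 0
    have "(n-1, Suc (n-1) mod n) \<in> ?R" using st[of "n-1"] n by simp
    moreover have "Suc (n-1) mod n = 0" using n by simp
    ultimately show ?case by auto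
  next
    case (Suc d)
    have "(n-1-Suc d, Suc (n-1-Suc d) mod n) \<in> ?R" using st[of "n-1-Suc d"] n by simp
    moreover have "Suc (n-1-Suc d) mod n = n-1-d" using Suc.prems n by simp
    ultimately have "(n-1-Suc d, n-1-d) \<in> ?R" by simp
    thus ?case using Suc by (meson Suc_lessD converse_rtrancl_into_rtrancl)
  qed
  show ?thesis unfolding strongly_connected_def
  proof (intro allI impI)
    fix i j assume i: "i < dim_row (Sm n)" and j: "j < dim_row (Sm n)"
    have "(i,0) \<in> ?R\<^sup>*" using b[of "n-1-i"] i by simp
    thus "(i,j) \<in> ?R\<^sup>*" using a[of j] j by simp
  qed
qed

lemma sc_neg: "n \<ge> 4 \<Longrightarrow> strongly_connected (- Sm n)"
  using sc unfolding strongly_connected_def by (simp add: arcs_neg)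

lemma nb: assumes n: "n \<ge> 4" shows "\<not> cycle_balanced (Sm n)" "\<not> cycle_balanced (- Sm n)"
proof -
  have dc: "dcycle (Sm n) [0,1]" using n Sm_10[OF n] Sm_01[OF n]
    by (auto simp: dcycle_def arcs_def less_Suc_eq)
  have "cycle_sign (Sm n) [0,1] = -1" using Sm_10[OF n] Sm_01[OF n]
    by (simp add: cycle_sign_def lessThan_Suc numeral_2_eq_2)
  thus "\<not> cycle_balanced (Sm n)" using dc unfolding cycle_balanced_def by force
  have dc': "dcycle (- Sm n) [0,1]" using dc unfolding dcycle_def by (simp add: arcs_neg)
  have "cycle_sign (- Sm n) [0,1] = -1" using Sm_10[OF n] Sm_01[OF n] n
    by (simp add: cycle_sign_def lessThan_Suc numeral_2_eq_2)
  thus "\<not> cycle_balanced (- Sm n)" using dc' unfolding cycle_balanced_def by force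
qed

lemma root1: assumes n: "n \<ge> 4"
  shows "poly (char_poly (map_mat of_int (Sm n) :: complex mat)) 1 = 0"
proof -
  let ?B = "map_mat of_int (Sm n) :: complex mat"
  have B: "?B \<in> carrier_mat n n" by simp
  let ?v = "vec n (\<lambda>_. 1) :: complex vec"
  have "eigenvector ?B ?v 1" unfolding eigenvector_def
  proof (intro conjI)
    show "?v \<in> carrier_vec (dim_row ?B)" by simp
    show "?v \<noteq> 0\<^sub>v (dim_row ?B)"
    proof
      assume "?v = 0\<^sub>v (dim_row ?B)"
      hence "?v $ 0 = 0\<^sub>v n $ 0" by simp
      thus False using n by simp
    qed
    show "?B *\<^sub>v ?v = 1 \<cdot>\<^sub>v ?v"
    proof (rule eq_vecI)
      fix i assume "i < dim_vec (1 \<cdot>\<^sub>v ?v)"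
      hence i: "i < n" by simp
      have "Suc i mod n < n" using n by simp
      thus "(?B *\<^sub>v ?v) $ i = (1 \<cdot>\<^sub>v ?v) $ i"
        using i n by (subst mult_entry[OF n i]) auto
    qed simp
  qed
  hence "eigenvalue ?B 1" unfolding eigenvalue_def by blast
  thus ?thesis using eigenvalue_root_char_poly[OF B] by simp
qed

lemma rootm1: assumes n: "n \<ge> 4"
  shows "poly (char_poly (map_mat of_int (Sm n) :: complex mat)) (-1) \<noteq> 0"
proof
  let ?B = "map_mat of_int (Sm n) :: complex mat"
  have B: "?B \<in> carrier_mat n n" by simp
  assume "poly (char_poly ?B) (-1) = 0"
  hence "eigenvalue ?B (-1)" using eigenvalue_root_char_poly[OF B] by simp
  then obtain v where v: "v \<in> carrier_vec n" "v \<noteq> 0\<^sub>v n" "?B *\<^sub>v v = (-1) \<cdot>\<^sub>v v"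
    unfolding eigenvalue_def eigenvector_def by auto
  have E: "(if i = 1 then v $ 3 - v $ 0 else 0) + v $ (Suc i mod n) = - v $ i" if "i < n" for i
  proof -
    have "(?B *\<^sub>v v) $ i = ((-1) \<cdot>\<^sub>v v) $ i" using v(3) by simp
    thus ?thesis using mult_entry[OF n that v(1)] that v(1) by simp
  qed
  have E0: "v $ 1 = - v $ 0" using E[of 0] n by simp
  have E1: "v $ 3 - v $ 0 + v $ 2 = - v $ 1" using E[of 1] n by (simp add: numeral_2_eq_2)
  have E2: "v $ 3 = - v $ 2" using E[of 2] n by (simp add: numeral_3_eq_3 numeral_2_eq_2)
  have v0: "v $ 0 = 0" using E0 E1 E2 by (simp add: algebra_simps)
  have v1: "v $ 1 = 0" using E0 v0 by simp
  have En: "v $ 0 = - v $ (n-1)" using E[of "n-1"] n by (simp split: if_splits)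
  have vn: "v $ (n-1) = 0" using En v0 by simp
  have down: "v $ (n-1-k) = 0" if "k \<le> n - 3" for k
    using that
  proof (induction k)
    case 0 thus ?case using vn by simp
  next
    case (Suc k)
    let ?i = "n - 1 - Suc k"
    have i2: "?i \<ge> 2" "?i \<noteq> 1" "?i < n" using Suc.prems n by auto
    have "Suc ?i mod n = n - 1 - k" using Suc.prems n by simp
    hence "v $ (n-1-k) = - v $ ?i" using E[of ?i] i2 by simp
    thus ?case using Suc by simp
  qed
  have "v = 0\<^sub>v n"
  proof (rule eq_vecI)
    fix i assume "i < dim_vec (0\<^sub>v n :: complex vec)"
    hence i: "i < n" by simp
    show "v $ i = 0\<^sub>v n $ i"
    proof (cases "i \<le> 1")
      case True thus ?thesis using v0 v1 i by (cases i) auto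
    next
      case False
      hence "v $ (n - 1 - (n - 1 - i)) = 0" using down[of "n-1-i"] i by simp
      thus ?thesis using i by simp
    qed
  qed (use v in simp)
  thus False using v(2) by simp
qed

theorem theorem4p1:
  fixes n :: nat
  assumes "n \<ge> 4"
  shows "\<exists>S S'. sidigraph n S \<and> sidigraph n S' \<and>
           strongly_connected S \<and> strongly_connected S' \<and>
           \<not> cycle_balanced S \<and> \<not> cycle_balanced S' \<and>
           \<not> cospectral S S' \<and> energy S = energy S'"
proof (intro exI conjI)
  note n = assms
  let ?B = "map_mat of_int (Sm n) :: complex mat"
  have sp: "spectrum_sd (- Sm n) = image_mset uminus (spectrum_sd (Sm n))"
    by (rule spec_neg[OF Sm_carrier])
  have nz: "char_poly ?B \<noteq> 0"
    using degree_monic_char_poly[of ?B n] by auto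
  have in1: "1 \<in># spectrum_sd (Sm n)"
    using root1[OF n] nz by (simp add: spectrum_sd_def)
  have nm1: "- 1 \<notin># spectrum_sd (Sm n)"
    using rootm1[OF n] nz by (simp add: spectrum_sd_def)
  show "\<not> cospectral (Sm n) (- Sm n)"
  proof
    assume "cospectral (Sm n) (- Sm n)"
    hence "1 \<in># image_mset uminus (spectrum_sd (Sm n))" using in1 sp by (simp add: cospectral_def)
    then obtain x where "x \<in># spectrum_sd (Sm n)" "1 = - x" by auto
    hence "- 1 \<in># spectrum_sd (Sm n)" by (simp add: minus_equation_iff)
    thus False using nm1 by simp
  qed
  show "energy (Sm n) = energy (- Sm n)"
    unfolding energy_def sp by (simp add: multiset.map_comp o_def)
qed (use sidi[OF assms] sc[OF assms] sc_neg[OF assms] nb[OF assms] in auto)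

end
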